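(* Every quasi 4-connected graph $G$ has a star-decomposition of adhesion three whose central torso is internally 4-connected or isomorphic to $K_4$ or to $K_3$, and all of whose leaf-bags have exactly four vertices.
   Context: All graphs are finite and simple. A separation of $G$ is an unordered pair $\{A,B\}$ with $A\cup B=V(G)$ and no edge between $A\setminus B$ and $B\setminus A$; its order is $|A\cap B|$; a 3-separation has order exactly 3; it is proper if $A\setminus B\ne\emptyset\ne B\setminus A$. A graph is quasi 4-connected if it is 3-connected, has more than four vertices, and every 3-separation $\{A,B\}$ has a side ($A$ or $B$) with at most four vertices. A graph is internally 4-connected if it is 3-connected, has more than four vertices, and every proper 3-separation $\{A,B\}$ has independent separator $A\cap B$ and satisfies $|A\setminus B|=1$ or $|B\setminus A|=1$. A star-decomposition is a tree-decomposition $(T,(V_t)_{t\in T})$ whose tree $T$ is a star $K_{1,n}$ ($n\ge0$) with a designated central node $c$ (for $n=1$ either node may serve as centre); it has adhesion three if every adhesion set $V_t\cap V_{t'}$ for an edge $tt'$ of $T$ has exactly three vertices; leaf-bags are the bags $V_t$ of the leaves $t\neq c$; the central torso is the graph obtained from $G[V_c]$ by making every adhesion set $V_c\cap V_t$ a clique. *)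

theory Defs
  imports Main
begin

definition graph :: "'a set \<Rightarrow> ('a \<Rightarrow> 'a \<Rightarrow> bool) \<Rightarrow> bool" where
  "graph V E \<longleftrightarrow> finite V \<and> (\<forall>x y. E x y \<longrightarrow> x \<in> V \<and> y \<in> V)
     \<and> (\<forall>x y. E x y \<longrightarrow> E y x) \<and> (\<forall>x. \<not> E x x)"

definition connected_on :: "('a \<Rightarrow> 'a \<Rightarrow> bool) \<Rightarrow> 'a set \<Rightarrow> bool" where
  "connected_on E S \<longleftrightarrow> S \<noteq> {} \<and>
     (\<forall>x\<in>S. \<forall>y\<in>S. (\<lambda>a b. E a b \<and> a \<in> S \<and> b \<in> S)\<^sup>*\<^sup>* x y)"

definition k_connected :: "nat \<Rightarrow> 'a set \<Rightarrow> ('a \<Rightarrow> 'a \<Rightarrow> bool) \<Rightarrow> bool" where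
  "k_connected k V E \<longleftrightarrow> card V > k \<and>
     (\<forall>X. X \<subseteq> V \<and> card X < k \<longrightarrow> connected_on E (V - X))"

definition separation :: "'a set \<Rightarrow> ('a \<Rightarrow> 'a \<Rightarrow> bool) \<Rightarrow> 'a set \<Rightarrow> 'a set \<Rightarrow> bool" where
  "separation V E A B \<longleftrightarrow> A \<union> B = V \<and>
     (\<forall>x y. x \<in> A - B \<and> y \<in> B - A \<longrightarrow> \<not> E x y)"

definition quasi_4_connected :: "'a set \<Rightarrow> ('a \<Rightarrow> 'a \<Rightarrow> bool) \<Rightarrow> bool" where
  "quasi_4_connected V E \<longleftrightarrow> k_connected 3 V E \<and> card V > 4 \<and>
     (\<forall>A B. separation V E A B \<and> card (A \<inter> B) = 3 \<longrightarrow> card A \<le> 4 \<or> card B \<le> 4)"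

definition internally_4_connected :: "'a set \<Rightarrow> ('a \<Rightarrow> 'a \<Rightarrow> bool) \<Rightarrow> bool" where
  "internally_4_connected V E \<longleftrightarrow> k_connected 3 V E \<and> card V > 4 \<and>
     (\<forall>A B. separation V E A B \<and> card (A \<inter> B) = 3 \<and> A - B \<noteq> {} \<and> B - A \<noteq> {} \<longrightarrow>
        (\<forall>x\<in>A \<inter> B. \<forall>y\<in>A \<inter> B. \<not> E x y) \<and> (card (A - B) = 1 \<or> card (B - A) = 1))"

definition graph_iso :: "'a set \<Rightarrow> ('a \<Rightarrow> 'a \<Rightarrow> bool) \<Rightarrow> 'b set \<Rightarrow> ('b \<Rightarrow> 'b \<Rightarrow> bool) \<Rightarrow> bool" where
  "graph_iso V E W F \<longleftrightarrow> (\<exists>f. bij_betw f V W \<and> (\<forall>x\<in>V. \<forall>y\<in>V. E x y \<longleftrightarrow> F (f x) (f y)))"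

definition K_verts :: "nat \<Rightarrow> nat set" where "K_verts n = {..<n}"
definition K_edges :: "nat \<Rightarrow> nat \<Rightarrow> nat \<Rightarrow> bool" where
  "K_edges n x y \<longleftrightarrow> x < n \<and> y < n \<and> x \<noteq> y"

text \<open>Star-decomposition of adhesion three: central bag C (central node c) and leaf bags
  L 0, ..., L (n-1) (leaves of the star K_{1,n}).  The tree-decomposition axioms for a star:
  bags are vertex subsets, every vertex and every edge lies in some bag, and for every vertex
  the nodes whose bags contain it induce a connected subtree of the star, i.e. they include
  the centre or consist of a single leaf.\<close>
definition star_decomposition ::
  "'a set \<Rightarrow> ('a \<Rightarrow> 'a \<Rightarrow> bool) \<Rightarrow> 'a set \<Rightarrow> nat \<Rightarrow> (nat \<Rightarrow> 'a set) \<Rightarrow> bool" where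
  "star_decomposition V E C n L \<longleftrightarrow>
     C \<subseteq> V \<and> (\<forall>i<n. L i \<subseteq> V) \<and>
     C \<union> (\<Union>i<n. L i) = V \<and>
     (\<forall>x y. E x y \<longrightarrow> (x \<in> C \<and> y \<in> C) \<or> (\<exists>i<n. x \<in> L i \<and> y \<in> L i)) \<and>
     (\<forall>v\<in>V. v \<in> C \<or> (\<forall>i<n. \<forall>j<n. v \<in> L i \<and> v \<in> L j \<longrightarrow> i = j))"

definition adhesion_three :: "'a set \<Rightarrow> nat \<Rightarrow> (nat \<Rightarrow> 'a set) \<Rightarrow> bool" where
  "adhesion_three C n L \<longleftrightarrow> (\<forall>i<n. card (C \<inter> L i) = 3)"

definition central_torso :: "('a \<Rightarrow> 'a \<Rightarrow> bool) \<Rightarrow> 'a set \<Rightarrow> nat \<Rightarrow> (nat \<Rightarrow> 'a set) \<Rightarrow> 'a \<Rightarrow> 'a \<Rightarrow> bool" where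
  "central_torso E C n L x y \<longleftrightarrow> x \<in> C \<and> y \<in> C \<and>
     (E x y \<or> (x \<noteq> y \<and> (\<exists>i<n. x \<in> L i \<and> y \<in> L i)))"

end

theory Submission imports Defs begin


definition tor :: "('a \<Rightarrow> 'a \<Rightarrow> bool) \<Rightarrow> 'a set \<Rightarrow> 'a set \<Rightarrow> 'a \<Rightarrow> 'a \<Rightarrow> bool" where
  "tor E C X a b \<longleftrightarrow> a \<in> C \<and> b \<in> C \<and> (E a b \<or> (a \<noteq> b \<and> (\<exists>z\<in>X. E z a \<and> E z b)))"

lemma conn_T:
  assumes g: "graph V E" and k: "k_connected 3 V E"
    and ind: "\<forall>a\<in>X. \<forall>b\<in>X. \<not> E a b" and C: "C = V - X"
    and Y: "Y \<subseteq> C" "card Y < 3" "C - Y \<noteq> {}"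
  shows "connected_on (tor E C X) (C - Y)"
proof -
  have YV: "Y \<subseteq> V" using Y C by auto
  have cG: "connected_on E (V - Y)" using k YV Y(2) unfolding k_connected_def by auto
  have sym: "\<And>a b. E a b \<Longrightarrow> E b a" and inV: "\<And>a b. E a b \<Longrightarrow> a \<in> V \<and> b \<in> V"
    using g unfolding graph_def by blast+
  let ?Tp = "(\<lambda>a b. tor E C X a b \<and> a \<in> C - Y \<and> b \<in> C - Y)\<^sup>*\<^sup>*"
  have main: "?Tp x y" if xy: "x \<in> C - Y" "y \<in> C - Y" for x y
  proof -
    have p: "(\<lambda>a b. E a b \<and> a \<in> V - Y \<and> b \<in> V - Y)\<^sup>*\<^sup>* x y"
      using cG xy C unfolding connected_on_def by auto
    have "(z \<in> C - Y \<and> ?Tp x z) \<or> (z \<in> X \<and> (\<exists>a. E z a \<and> a \<in> C - Y \<and> ?Tp x a))"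
      if "(\<lambda>a b. E a b \<and> a \<in> V - Y \<and> b \<in> V - Y)\<^sup>*\<^sup>* x z" for z
      using that
    proof (induction rule: rtranclp_induct)
      case base
      then show ?case using xy by auto
    next
      case (step z z')
      from step.IH show ?case
      proof
        assume h: "z \<in> C - Y \<and> ?Tp x z"
        show ?thesis
        proof (cases "z' \<in> X")
          case True
          then show ?thesis using h step.hyps(2) sym by blast
        next
          case False
          then have "z' \<in> C - Y" using step.hyps(2) C by auto
          moreover have "tor E C X z z'" using h step.hyps(2) \<open>z' \<in> C - Y\<close> unfolding tor_def by auto
          ultimately have "?Tp x z'" using h
            by (metis (mono_tags, lifting) rtranclp.rtrancl_into_rtrancl)
          then show ?thesis using \<open>z' \<in> C - Y\<close> by blast
        qed
      next
        assume h: "z \<in> X \<and> (\<exists>a. E z a \<and> a \<in> C - Y \<and> ?Tp x a)"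
        then obtain a where a: "E z a" "a \<in> C - Y" "?Tp x a" by blast
        have "z' \<notin> X" using h ind step.hyps(2) by blast
        then have z': "z' \<in> C - Y" using step.hyps(2) C by auto
        show ?thesis
        proof (cases "a = z'")
          case True then show ?thesis using a z' by blast
        next
          case False
          then have "tor E C X a z'" using a z' h step.hyps(2) unfolding tor_def by auto
          then have "?Tp x z'" using a z'
            by (metis (mono_tags, lifting) rtranclp.rtrancl_into_rtrancl)
          then show ?thesis using z' by blast
        qed
      qed
    qed
    from this[OF p] show ?thesis using xy C by auto
  qed
  show ?thesis unfolding connected_on_def using Y(3) main by blast
qed

lemma two_path:
  assumes "(\<lambda>a b. T a b \<and> a \<in> {x,y} \<and> b \<in> {x,y})\<^sup>*\<^sup>* x y" "x \<noteq> y"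
    and sym: "\<And>a b. T a b \<Longrightarrow> T b a"
  shows "T x y"
proof -
  have "z = x \<or> T x z" if "(\<lambda>a b. T a b \<and> a \<in> {x,y} \<and> b \<in> {x,y})\<^sup>*\<^sup>* x z" for z
    using that
  proof (induction rule: rtranclp_induct)
    case base then show ?case by simp
  next
    case (step z z')
    then show ?case using sym by auto
  qed
  from this[OF assms(1)] assms(2) show ?thesis by auto
qed

lemma iso_K:
  assumes "finite C" "card C = k" "\<And>a b. T a b \<longleftrightarrow> a \<in> C \<and> b \<in> C \<and> a \<noteq> b"
  shows "graph_iso C T (K_verts k) (K_edges k)"
proof -
  obtain h where h: "bij_betw h C {0..<card C}" using ex_bij_betw_finite_nat assms(1) by blast
  have "\<forall>x\<in>C. \<forall>y\<in>C. T x y \<longleftrightarrow> K_edges k (h x) (h y)"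
  proof (intro ballI)
    fix x y assume "x \<in> C" "y \<in> C"
    then show "T x y \<longleftrightarrow> K_edges k (h x) (h y)"
      using h assms unfolding K_edges_def bij_betw_def inj_on_def by auto
  qed
  then show ?thesis unfolding graph_iso_def K_verts_def using h assms(2)
    by (metis atLeast0LessThan)
qed


lemma sep_sym:
  assumes "separation V E A B" "\<And>a b. E a b \<Longrightarrow> E b a"
  shows "separation V E B A"
  using assms unfolding separation_def by blast

lemma key:
  assumes g: "graph V E" and k: "k_connected 3 V E" and s: "separation V E A B"
    and c3: "card (A \<inter> B) = 3" and c4: "card A \<le> 4" and u: "u \<in> A - B" and w: "w \<in> B - A"
  shows "A = insert u (A \<inter> B) \<and> card {v. E u v} = 3"
proof -
  have fV: "finite V" using g unfolding graph_def by auto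
  have AV: "A \<subseteq> V" using s unfolding separation_def by auto
  then have fA: "finite A" using fV finite_subset by auto
  have "card (insert u (A \<inter> B)) = 4" using c3 u fA by (simp add: card_insert_disjoint)
  moreover have sub: "insert u (A \<inter> B) \<subseteq> A" using u by auto
  ultimately have eqA: "A = insert u (A \<inter> B)" using c4 fA
    by (metis card_seteq)
  have NA: "{v. E u v} \<subseteq> A \<inter> B"
  proof
    fix v assume v: "v \<in> {v. E u v}"
    have "v \<in> V" using v g unfolding graph_def by auto
    have "v \<in> A"
    proof (rule ccontr)
      assume "v \<notin> A"
      then have "v \<in> B - A" using \<open>v \<in> V\<close> s unfolding separation_def by auto
      then show False using s u v unfolding separation_def by auto
    qed
    moreover have "v \<noteq> u" using v g unfolding graph_def by auto
    ultimately show "v \<in> A \<inter> B" using eqA by auto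
  qed
  have fN: "finite {v. E u v}" using NA fA finite_subset by blast
  have cle: "card {v. E u v} \<le> 3" using NA c3 fA by (metis card_mono finite_Int)
  have cge: "\<not> card {v. E u v} < 3"
  proof
    assume lt: "card {v. E u v} < 3"
    have NV: "{v. E u v} \<subseteq> V" using g unfolding graph_def by auto
    have cc: "connected_on E (V - {v. E u v})" using k lt NV unfolding k_connected_def by auto
    have uin: "u \<in> V - {v. E u v}" using u AV g unfolding graph_def by auto
    have win: "w \<in> V - {v. E u v}" using w s NA unfolding separation_def by auto
    have p: "(\<lambda>a b. E a b \<and> a \<in> V - {v. E u v} \<and> b \<in> V - {v. E u v})\<^sup>*\<^sup>* u w"
      using cc uin win unfolding connected_on_def by blast
    have "u \<noteq> w" using u w by auto
    with p show False
      by (cases rule: converse_rtranclpE) auto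
  qed
  show ?thesis using eqA cle cge by auto
qed

lemma no_sep:
  assumes g: "graph V E" and k: "k_connected 3 V E"
    and q: "\<forall>A B. separation V E A B \<and> card (A \<inter> B) = 3 \<longrightarrow> card A \<le> 4 \<or> card B \<le> 4"
    and ind: "\<forall>a\<in>X. \<forall>b\<in>X. \<not> E a b" and C: "C = V - X" and XV: "X \<subseteq> V"
    and maxl: "\<forall>v\<in>V - X. card {w. E v w} = 3 \<longrightarrow> (\<exists>z\<in>X. E v z)"
    and sT: "separation C (tor E C X) A' B'" and c3: "card (A' \<inter> B') = 3"
    and a: "a \<in> A' - B'" and b: "b \<in> B' - A'"
  shows False
proof -
  have sym: "\<And>a b. E a b \<Longrightarrow> E b a" and inV: "\<And>a b. E a b \<Longrightarrow> a \<in> V \<and> b \<in> V"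
    and irr: "\<And>a. \<not> E a a"
    using g unfolding graph_def by blast+
  have AB': "A' \<union> B' = C" and noT: "\<And>p q. p \<in> A' - B' \<Longrightarrow> q \<in> B' - A' \<Longrightarrow> \<not> tor E C X p q"
    using sT unfolding separation_def by auto
  define XA where "XA = {z\<in>X. \<exists>r\<in>A' - B'. E z r}"
  define XB where "XB = {z\<in>X. \<not> (\<exists>r\<in>A' - B'. E z r)}"
  define A where "A = A' \<union> XA"
  define B where "B = B' \<union> XB"
  have XC: "X \<inter> C = {}" using C by auto
  have AiB: "A \<inter> B = A' \<inter> B'" using XC AB' unfolding A_def B_def XA_def XB_def by auto
  have sG: "separation V E A B"
    unfolding separation_def
  proof (intro conjI allI impI)
    show "A \<union> B = V" using AB' C XV unfolding A_def B_def XA_def XB_def by auto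
  next
    fix p q assume pq: "p \<in> A - B \<and> q \<in> B - A"
    show "\<not> E p q"
    proof
      assume e: "E p q"
      have pA: "p \<in> A' - B' \<or> p \<in> XA" and qB: "q \<in> B' - A' \<or> q \<in> XB"
        using pq XC AB' unfolding A_def B_def XA_def XB_def by auto
      show False
      proof (cases "p \<in> XA")
        case True
        then obtain r where r: "r \<in> A' - B'" "E p r" unfolding XA_def by auto
        have pX: "p \<in> X" using True unfolding XA_def by auto
        show False
        proof (cases "q \<in> XB")
          case True then show ?thesis using pX ind e unfolding XB_def by auto
        next
          case False
          then have q: "q \<in> B' - A'" using qB by auto
          have "r \<noteq> q" using r q by auto
          then have "tor E C X r q" unfolding tor_def using r q AB' pX e by auto
          then show False using noT r q by auto
        qed
      next
        case False
        then have p: "p \<in> A' - B'" using pA by auto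
        show False
        proof (cases "q \<in> XB")
          case True then show ?thesis using p e sym unfolding XB_def by auto
        next
          case False
          then have q: "q \<in> B' - A'" using qB by auto
          have "tor E C X p q" unfolding tor_def using p q AB' e by auto
          then show False using noT p q by auto
        qed
      qed
    qed
  qed
  have c3G: "card (A \<inter> B) = 3" using AiB c3 by simp
  have aC: "a \<in> C" and bC: "b \<in> C" using a b AB' by auto
  have aAB: "a \<in> A - B" using a aC XC unfolding A_def B_def XB_def by auto
  have bBA: "b \<in> B - A" using b bC XC unfolding A_def B_def XA_def by auto
  from q sG c3G have "card A \<le> 4 \<or> card B \<le> 4" by blast
  then show False
  proof
    assume "card A \<le> 4"
    from key[OF g k sG c3G this aAB bBA]
    have eqA: "A = insert a (A \<inter> B)" and d: "card {v. E a v} = 3" by auto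
    obtain z where z: "z \<in> X" "E a z" using maxl aC C d by auto
    have "z \<in> XA" using z a sym unfolding XA_def by auto
    then have "z \<in> A - B" using XC AB' unfolding A_def B_def XA_def XB_def by auto
    then show False using eqA z aC XC by auto
  next
    assume "card B \<le> 4"
    have sG': "separation V E B A" using sep_sym[OF sG] sym by blast
    have c3G': "card (B \<inter> A) = 3" using c3G by (simp add: Int_commute)
    from key[OF g k sG' c3G' \<open>card B \<le> 4\<close> bBA aAB]
    have eqB: "B = insert b (B \<inter> A)" and d: "card {v. E b v} = 3" by auto
    obtain z where z: "z \<in> X" "E b z" using maxl bC C d by auto
    have "z \<notin> XA"
    proof
      assume "z \<in> XA"
      then obtain r where r: "r \<in> A' - B'" "E z r" unfolding XA_def by auto
      have "r \<noteq> b" using r b by auto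
      then have "tor E C X r b" unfolding tor_def using r b AB' z sym by auto
      then show False using noT r b by auto
    qed
    then have "z \<in> XB" using z unfolding XA_def XB_def by auto
    then have "z \<in> B - A" using XC AB' unfolding A_def B_def XA_def XB_def by auto
    then show False using eqB z bC XC by auto
  qed
qed


theorem mainTheorem11:
  fixes V :: "'a set" and E :: "'a \<Rightarrow> 'a \<Rightarrow> bool"
  assumes "graph V E" and "quasi_4_connected V E"
  shows "\<exists>C n L. star_decomposition V E C n L \<and> adhesion_three C n L \<and>
           (internally_4_connected C (central_torso E C n L)
            \<or> graph_iso C (central_torso E C n L) (K_verts 4) (K_edges 4)
            \<or> graph_iso C (central_torso E C n L) (K_verts 3) (K_edges 3)) \<and>
           (\<forall>i<n. card (L i) = 4)"
proof -
  note g = assms(1)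
  have k: "k_connected 3 V E" and cV: "card V > 4"
    and q: "\<forall>A B. separation V E A B \<and> card (A \<inter> B) = 3 \<longrightarrow> card A \<le> 4 \<or> card B \<le> 4"
    using assms(2) unfolding quasi_4_connected_def by auto
  have sym: "\<And>a b. E a b \<Longrightarrow> E b a" and inV: "\<And>a b. E a b \<Longrightarrow> a \<in> V \<and> b \<in> V"
    and irr: "\<And>a. \<not> E a a" and fV: "finite V"
    using g unfolding graph_def by blast+
  define D where "D = {v\<in>V. card {w. E v w} = 3}"
  have fD: "finite D" using fV unfolding D_def by auto
  define P where "P = (\<lambda>Y. Y \<subseteq> D \<and> (\<forall>a\<in>Y. \<forall>b\<in>Y. \<not> E a b))"
  have "\<exists>X. P X \<and> (\<forall>Y. P Y \<longrightarrow> card Y \<le> card X)"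
  proof (rule ex_has_greatest_nat[where k="{}" and b="card D + 1"])
    show "P {}" unfolding P_def by auto
    show "\<forall>Y. P Y \<longrightarrow> card Y < card D + 1"
      using fD card_mono unfolding P_def by fastforce
  qed
  then obtain X where PX: "P X" and mx: "\<And>Y. P Y \<Longrightarrow> card Y \<le> card X" by blast
  have XD: "X \<subseteq> D" and ind: "\<forall>a\<in>X. \<forall>b\<in>X. \<not> E a b" using PX unfolding P_def by auto
  have XV: "X \<subseteq> V" using XD unfolding D_def by auto
  have fX: "finite X" using XV fV finite_subset by auto
  have maxl: "\<forall>v\<in>V - X. card {w. E v w} = 3 \<longrightarrow> (\<exists>z\<in>X. E v z)"
  proof (intro ballI impI, rule ccontr)
    fix v assume v: "v \<in> V - X" "card {w. E v w} = 3" "\<not> (\<exists>z\<in>X. E v z)"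
    have "P (insert v X)" using PX v irr sym unfolding P_def D_def by auto
    then have "card (insert v X) \<le> card X" by (rule mx)
    then show False using v fX by auto
  qed
  define C where "C = V - X"
  define n where "n = card X"
  obtain f where f: "bij_betw f {0..<n} X" using ex_bij_betw_nat_finite[OF fX] unfolding n_def by blast
  have fimg: "f ` {..<n} = X" using f unfolding bij_betw_def by (simp add: atLeast0LessThan)
  have finj: "inj_on f {..<n}" using f unfolding bij_betw_def by (simp add: atLeast0LessThan)
  have ex: "\<And>Q. (\<exists>i<n. Q (f i)) \<longleftrightarrow> (\<exists>z\<in>X. Q z)" using fimg by auto
  have fX': "\<And>i. i < n \<Longrightarrow> f i \<in> X" using fimg by auto
  define L where "L = (\<lambda>i. insert (f i) {w. E (f i) w})"
  have NC: "\<And>z. z \<in> X \<Longrightarrow> {w. E z w} \<subseteq> C" using ind inV unfolding C_def by auto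
  have N3: "\<And>z. z \<in> X \<Longrightarrow> card {w. E z w} = 3" using XD unfolding D_def by auto
  have fN: "\<And>z. finite {w. E z w}" using fV inV by (metis finite_subset mem_Collect_eq subsetI)
  have tor_eq: "central_torso E C n L = tor E C X"
  proof (intro ext)
    fix a b
    have "a \<in> C \<Longrightarrow> b \<in> C \<Longrightarrow> (\<exists>i<n. a \<in> L i \<and> b \<in> L i) \<longleftrightarrow> (\<exists>i<n. E (f i) a \<and> E (f i) b)"
      using fX' unfolding L_def C_def by auto
    then show "central_torso E C n L a b = tor E C X a b"
      unfolding central_torso_def tor_def using ex[of "\<lambda>z. E z a \<and> E z b"] by auto
  qed
  have sd: "star_decomposition V E C n L"
    unfolding star_decomposition_def
  proof (intro conjI)
    show "C \<subseteq> V" unfolding C_def by auto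
    show "\<forall>i<n. L i \<subseteq> V" using fX' XV inV unfolding L_def by auto
    show "C \<union> (\<Union>i<n. L i) = V"
    proof
      show "C \<union> (\<Union>i<n. L i) \<subseteq> V" using fX' XV inV unfolding L_def C_def by auto
      show "V \<subseteq> C \<union> (\<Union>i<n. L i)"
      proof
        fix v assume "v \<in> V"
        show "v \<in> C \<union> (\<Union>i<n. L i)"
        proof (cases "v \<in> X")
          case True
          then obtain i where "i < n" "f i = v" using fimg by auto
          then show ?thesis unfolding L_def by auto
        next
          case False then show ?thesis using \<open>v \<in> V\<close> unfolding C_def by auto
        qed
      qed
    qed
    show "\<forall>x y. E x y \<longrightarrow> x \<in> C \<and> y \<in> C \<or> (\<exists>i<n. x \<in> L i \<and> y \<in> L i)"
    proof (intro allI impI)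
      fix x y assume e: "E x y"
      show "x \<in> C \<and> y \<in> C \<or> (\<exists>i<n. x \<in> L i \<and> y \<in> L i)"
      proof (cases "x \<in> X")
        case True
        then obtain i where "i < n" "f i = x" using fimg by auto
        then show ?thesis using e unfolding L_def by auto
      next
        case False
        show ?thesis
        proof (cases "y \<in> X")
          case True
          then obtain i where "i < n" "f i = y" using fimg by auto
          then show ?thesis using e sym unfolding L_def by auto
        next
          case False
          then show ?thesis using \<open>x \<notin> X\<close> e inV unfolding C_def by auto
        qed
      qed
    qed
    show "\<forall>v\<in>V. v \<in> C \<or> (\<forall>i<n. \<forall>j<n. v \<in> L i \<and> v \<in> L j \<longrightarrow> i = j)"
    proof (intro ballI)
      fix v assume "v \<in> V"
      show "v \<in> C \<or> (\<forall>i<n. \<forall>j<n. v \<in> L i \<and> v \<in> L j \<longrightarrow> i = j)"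
      proof (cases "v \<in> C")
        case False
        then have vX: "v \<in> X" using \<open>v \<in> V\<close> unfolding C_def by auto
        have "\<forall>i<n. v \<in> L i \<longrightarrow> f i = v"
          using vX ind fX' unfolding L_def by auto
        then show ?thesis using finj unfolding inj_on_def by auto
      qed auto
    qed
  qed
  have CL: "\<And>i. i < n \<Longrightarrow> C \<inter> L i = {w. E (f i) w}"
    using fX' NC unfolding L_def C_def by auto
  have adh: "adhesion_three C n L" unfolding adhesion_three_def using CL N3 fX' by auto
  have c4: "\<forall>i<n. card (L i) = 4" unfolding L_def using N3 fX' fN irr
    by (simp add: card_insert_disjoint)
  have fC: "finite C" using fV unfolding C_def by auto
  have conn: "\<And>Y. Y \<subseteq> C \<Longrightarrow> card Y < 3 \<Longrightarrow> C - Y \<noteq> {} \<Longrightarrow> connected_on (tor E C X) (C - Y)"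
    using conn_T[OF g k ind C_def] by blast
  have cC3: "card C \<ge> 3"
  proof (cases "X = {}")
    case True then show ?thesis using cV unfolding C_def by auto
  next
    case False
    then obtain z where "z \<in> X" by auto
    then show ?thesis using NC N3 fC card_mono by metis
  qed
  have tors: "internally_4_connected C (tor E C X)
            \<or> graph_iso C (tor E C X) (K_verts 4) (K_edges 4)
            \<or> graph_iso C (tor E C X) (K_verts 3) (K_edges 3)"
  proof (cases "card C \<ge> 5")
    case True
    have nsp: "\<forall>A' B'. separation C (tor E C X) A' B' \<and> card (A' \<inter> B') = 3 \<and> A' - B' \<noteq> {} \<and> B' - A' \<noteq> {} \<longrightarrow>
        (\<forall>x\<in>A' \<inter> B'. \<forall>y\<in>A' \<inter> B'. \<not> tor E C X x y) \<and> (card (A' - B') = 1 \<or> card (B' - A') = 1)"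
    proof (intro allI impI)
      fix A' B' assume h: "separation C (tor E C X) A' B' \<and> card (A' \<inter> B') = 3 \<and> A' - B' \<noteq> {} \<and> B' - A' \<noteq> {}"
      then obtain a b where "a \<in> A' - B'" "b \<in> B' - A'" by blast
      then have False using no_sep[OF g k q ind C_def XV maxl] h by blast
      then show "(\<forall>x\<in>A' \<inter> B'. \<forall>y\<in>A' \<inter> B'. \<not> tor E C X x y) \<and> (card (A' - B') = 1 \<or> card (B' - A') = 1)"
        by blast
    qed
    have kc: "k_connected 3 C (tor E C X)"
      unfolding k_connected_def
    proof (intro conjI allI impI)
      show "3 < card C" using True by auto
      fix Y assume Y: "Y \<subseteq> C \<and> card Y < 3"
      have "C - Y \<noteq> {}"
      proof
        assume "C - Y = {}"
        then have "C \<subseteq> Y" by auto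
        then have "card C \<le> card Y" using Y fC card_mono finite_subset by metis
        then show False using Y True by auto
      qed
      then show "connected_on (tor E C X) (C - Y)" using conn Y by auto
    qed
    have "internally_4_connected C (tor E C X)"
      unfolding internally_4_connected_def using kc True nsp by auto
    then show ?thesis by blast
  next
    case False
    have comp: "tor E C X a b \<longleftrightarrow> a \<in> C \<and> b \<in> C \<and> a \<noteq> b" for a b
    proof
      assume "tor E C X a b" then show "a \<in> C \<and> b \<in> C \<and> a \<noteq> b" using irr unfolding tor_def by auto
    next
      assume ab: "a \<in> C \<and> b \<in> C \<and> a \<noteq> b"
      define Y where "Y = C - {a, b}"
      have Ysub: "Y \<subseteq> C" unfolding Y_def by auto
      have "card Y = card C - 2" unfolding Y_def using ab fC by (simp add: card_Diff_subset)
      then have cY: "card Y < 3" using False by auto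
      have CY: "C - Y = {a, b}" unfolding Y_def using ab by auto
      have "connected_on (tor E C X) {a, b}" using conn[OF Ysub cY] CY by auto
      then have "(\<lambda>x y. tor E C X x y \<and> x \<in> {a,b} \<and> y \<in> {a,b})\<^sup>*\<^sup>* a b"
        unfolding connected_on_def by auto
      then show "tor E C X a b"
        by (rule two_path) (use ab sym in \<open>auto simp: tor_def\<close>)
    qed
    have "card C = 4 \<or> card C = 3" using False cC3 by auto
    then show ?thesis using iso_K[OF fC _ comp] by auto
  qed
  show ?thesis
    apply (rule exI[of _ C], rule exI[of _ n], rule exI[of _ L])
    using sd adh c4 tors tor_eq by simp
qed

end
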